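(* Let $G=(V,E)$ be a graph and let $\alpha$ be the cardinality of a maximum independent set of $G$. For any edge weight $w$ and vertex measure $\mu$ on $G$, $$\alpha\le\min_{\sigma}\#\{k: L_k(\Gamma^\sigma)=0\},$$ where the minimum is over all signatures $\sigma:E\to\{+1,-1\}$ and $\Gamma^\sigma=(G,\sigma)$ (with the given $w$ and $\mu$).
   Context: $G=(V,E)$ is a finite undirected graph without self-loops, $V=\{1,\dots,n\}$. A signed graph $(G,\sigma)$ has signature $\sigma:E\to\{\pm1\}$, edge weight $w:E\to(0,\infty)$, vertex measure $\mu:V\to(0,\infty)$, potential $\kappa:V\to\mathbb R$. For $p\ge1$ and nonzero $f$, $\mathcal R_p^\sigma(f)=\frac{\sum_{\{i,j\}\in E}w_{ij}|f(i)-\sigma_{ij}f(j)|^p+\sum_i\kappa_i|f(i)|^p}{\sum_i\mu_i|f(i)|^p}$; $\mathcal S_p=\{f:\sum_i\mu_i|f(i)|^p=1\}$; Krasnoselskii genus $\gamma(B)$ of closed symmetric $B\subset\mathbb R^n\setminus\{0\}$: least $k$ with an odd continuous map $B\to\mathbb R^k\setminus\{0\}$; $\mathcal F_k(\mathcal S_p)$ = closed symmetric $B\subset\mathcal S_p$ with $\gamma(B)\ge k$; $\lambda_k^{(p)}=\min_{B\in\mathcal F_k(\mathcal S_p)}\max_{f\in B}\mathcal R_p^\sigma(f)$. Cut-off adjacency eigenvalues: $L_k(\Gamma):=\lim_{p\to\infty}2^{-p}\lambda_k^{(p)}(\Gamma)$, $k=1,\dots,n$ (limits exist, are nonnegative and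 independent of $\kappa$). *)

theory Defs
  imports "HOL-Analysis.Analysis"
begin

definition simple_graph :: "('v \<Rightarrow> 'v \<Rightarrow> bool) \<Rightarrow> bool" where
  "simple_graph adj \<longleftrightarrow> (\<forall>i j. adj i j \<longrightarrow> adj j i) \<and> (\<forall>i. \<not> adj i i)"

definition is_signature :: "('v \<Rightarrow> 'v \<Rightarrow> bool) \<Rightarrow> ('v \<Rightarrow> 'v \<Rightarrow> real) \<Rightarrow> bool" where
  "is_signature adj \<sigma> \<longleftrightarrow>
     (\<forall>i j. adj i j \<longrightarrow> (\<sigma> i j = 1 \<or> \<sigma> i j = -1) \<and> \<sigma> i j = \<sigma> j i)"

definition is_edge_weight :: "('v \<Rightarrow> 'v \<Rightarrow> bool) \<Rightarrow> ('v \<Rightarrow> 'v \<Rightarrow> real) \<Rightarrow> bool" where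
  "is_edge_weight adj w \<longleftrightarrow> (\<forall>i j. adj i j \<longrightarrow> w i j > 0 \<and> w i j = w j i)"

text \<open>p-Rayleigh quotient. Each undirected edge {i,j} occurs twice as an ordered
  pair, hence the factor 1/2 (the summand is symmetric in i and j).\<close>
definition rayleigh ::
  "('v::finite \<Rightarrow> 'v \<Rightarrow> bool) \<Rightarrow> ('v \<Rightarrow> 'v \<Rightarrow> real) \<Rightarrow> ('v \<Rightarrow> 'v \<Rightarrow> real)
   \<Rightarrow> ('v \<Rightarrow> real) \<Rightarrow> ('v \<Rightarrow> real) \<Rightarrow> real \<Rightarrow> real^'v \<Rightarrow> real" where
  "rayleigh adj \<sigma> w \<mu> \<kappa> p f =
     ((1/2) * (\<Sum>(i,j)\<in>{(i,j). adj i j}. w i j * \<bar>f$i - \<sigma> i j * f$j\<bar> powr p)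
      + (\<Sum>i\<in>UNIV. \<kappa> i * \<bar>f$i\<bar> powr p))
     / (\<Sum>i\<in>UNIV. \<mu> i * \<bar>f$i\<bar> powr p)"

definition sphere_p :: "('v::finite \<Rightarrow> real) \<Rightarrow> real \<Rightarrow> (real^'v) set" where
  "sphere_p \<mu> p = {f. (\<Sum>i\<in>UNIV. \<mu> i * \<bar>f$i\<bar> powr p) = 1}"

text \<open>An odd continuous map B \<rightarrow> R^k - {0}, written out componentwise.\<close>
definition genus_le :: "('a::real_normed_vector) set \<Rightarrow> nat \<Rightarrow> bool" where
  "genus_le B k \<longleftrightarrow> (\<exists>g :: nat \<Rightarrow> 'a \<Rightarrow> real.
      (\<forall>i<k. continuous_on B (g i) \<and> (\<forall>x\<in>B. g i (-x) = - g i x)) \<and>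
      (\<forall>x\<in>B. \<exists>i<k. g i x \<noteq> 0))"

definition genus :: "('a::real_normed_vector) set \<Rightarrow> nat" where
  "genus B = (LEAST k. genus_le B k)"

definition genus_family :: "('v::finite \<Rightarrow> real) \<Rightarrow> real \<Rightarrow> nat \<Rightarrow> (real^'v) set set" where
  "genus_family \<mu> p k = {B. B \<subseteq> sphere_p \<mu> p \<and> closed B \<and> (\<forall>x\<in>B. -x \<in> B) \<and> genus B \<ge> k}"

text \<open>Variational eigenvalue lambda_k^(p) (min-max; min and max are attained).\<close>
definition var_eig ::
  "('v::finite \<Rightarrow> 'v \<Rightarrow> bool) \<Rightarrow> ('v \<Rightarrow> 'v \<Rightarrow> real) \<Rightarrow> ('v \<Rightarrow> 'v \<Rightarrow> real)
   \<Rightarrow> ('v \<Rightarrow> real) \<Rightarrow> ('v \<Rightarrow> real) \<Rightarrow> real \<Rightarrow> nat \<Rightarrow> real" where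
  "var_eig adj \<sigma> w \<mu> \<kappa> p k =
     Inf ((\<lambda>B. Sup (rayleigh adj \<sigma> w \<mu> \<kappa> p ` B)) ` genus_family \<mu> p k)"

text \<open>Cut-off adjacency eigenvalue L_k = lim_{p\<rightarrow>\<infinity>} 2^{-p} lambda_k^(p).\<close>
definition cutoff_eig ::
  "('v::finite \<Rightarrow> 'v \<Rightarrow> bool) \<Rightarrow> ('v \<Rightarrow> 'v \<Rightarrow> real) \<Rightarrow> ('v \<Rightarrow> 'v \<Rightarrow> real)
   \<Rightarrow> ('v \<Rightarrow> real) \<Rightarrow> ('v \<Rightarrow> real) \<Rightarrow> nat \<Rightarrow> real" where
  "cutoff_eig adj \<sigma> w \<mu> \<kappa> k = Lim at_top (\<lambda>p. 2 powr (-p) * var_eig adj \<sigma> w \<mu> \<kappa> p k)"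

definition independent_set :: "('v \<Rightarrow> 'v \<Rightarrow> bool) \<Rightarrow> 'v set \<Rightarrow> bool" where
  "independent_set adj S \<longleftrightarrow> (\<forall>i\<in>S. \<forall>j\<in>S. \<not> adj i j)"

definition independence_number :: "('v::finite \<Rightarrow> 'v \<Rightarrow> bool) \<Rightarrow> nat" where
  "independence_number adj = Max (card ` {S. independent_set adj S})"

end

theory Submission
  imports Defs "HOL-Homology.Homology"
begin


lemma euc_step:
  fixes F :: "'a::euclidean_space \<Rightarrow> 'a"
  assumes ST: "subspace S" "subspace T" "dim S < dim T" "S \<subseteq> T"
    and e: "e \<in> T" "norm e = 1" and eS: "\<And>x. x \<in> T \<Longrightarrow> x \<bullet> e = 0 \<Longrightarrow> x \<in> S"
    and Se: "\<And>x. x \<in> S \<Longrightarrow> x \<bullet> e = 0"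
    and contF: "continuous_on (sphere 0 1 \<inter> T) F"
    and Fim: "F \<in> (sphere 0 1 \<inter> T) \<rightarrow> sphere 0 1 \<inter> T"
    and Fodd: "\<And>x. x \<in> sphere 0 1 \<inter> T \<Longrightarrow> F (- x) = - F x"
  obtains G d where "continuous_on (sphere 0 1 \<inter> T) G"
    "G \<in> (sphere 0 1 \<inter> T) \<rightarrow> sphere 0 1 \<inter> T"
    "\<And>x. x \<in> sphere 0 1 \<inter> T \<Longrightarrow> G (- x) = - G x"
    "homotopic_with_canon (\<lambda>z. True) (sphere 0 1 \<inter> T) (sphere 0 1 \<inter> T) F G"
    "d \<in> sphere 0 1 \<inter> T" "\<And>x. x \<in> sphere 0 1 \<inter> S \<Longrightarrow> G x \<bullet> d = 0"
proof -
  let ?ST = "sphere (0::'a) 1 \<inter> T"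
  have cpt: "compact ?ST"
    by (simp add: \<open>subspace T\<close> closed_subspace compact_Int_closed)
  have symm: "- x \<in> ?ST" if "x \<in> ?ST" for x
    using that ST by (auto simp: subspace_neg)
  obtain p where pfp: "polynomial_function p" and pim: "p ` ?ST \<subseteq> T"
      and p12: "\<And>x. x \<in> ?ST \<Longrightarrow> norm (F x - p x) < 1/2"
    using Stone_Weierstrass_polynomial_function_subspace [OF cpt contF _ \<open>subspace T\<close>, of "1/2"] Fim
    by (auto simp: image_subset_iff)
  define q where "q \<equiv> \<lambda>x. (1/2) *\<^sub>R (p x - p (- x))"
  have pfneg: "polynomial_function (p \<circ> (\<lambda>x. - x))"
    by (intro polynomial_function_compose pfp polynomial_function_minus polynomial_function_id)
  have pfq: "polynomial_function q"
    unfolding q_def using pfneg pfp by (auto simp: o_def)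
  have qodd: "q (- x) = - q x" for x
    by (simp add: q_def algebra_simps)
  have qT: "q x \<in> T" if "x \<in> ?ST" for x
    using pim symm[OF that] that ST unfolding q_def
    by (auto intro!: subspace_scale subspace_diff)
  have q12: "norm (F x - q x) < 1/2" if "x \<in> ?ST" for x
  proof -
    have "F x - q x = (1/2) *\<^sub>R ((F x - p x) - (F (- x) - p (- x)))"
      using Fodd[OF that] by (simp add: q_def algebra_simps flip: scaleR_add_left)
    then have "norm (F x - q x) \<le> (1/2) * (norm (F x - p x) + norm (F (- x) - p (- x)))"
      by (simp add: norm_triangle_ineq4)
    also have "\<dots> < 1/2"
      using p12[OF that] p12[OF symm[OF that]] by simp
    finally show ?thesis .
  qed
  have Fn: "norm (F x) = 1" "F x \<in> T" if "x \<in> ?ST" for x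
    using Fim that by auto
  have qnz: "q x \<noteq> 0" if "x \<in> ?ST" for x
    using q12[OF that] Fn[OF that] by auto
  have diffq: "q differentiable_on A" for A
    by (metis pfq differentiable_on_polynomial_function)
  have contq: "continuous_on A q" for A
    using diffq differentiable_imp_continuous_on by blast
  define h where "h \<equiv> \<lambda>x. inverse (norm (q x)) *\<^sub>R q x"
  have hodd: "h (- x) = - h x" for x
    by (simp add: h_def qodd)
  have hST: "h x \<in> ?ST" if "x \<in> ?ST" for x
    unfolding h_def using qnz[OF that] qT[OF that] ST by (auto intro: subspace_scale)
  have hn: "norm (h x) = 1" if "norm x = 1" "x \<in> T" for x
    using hST[of x] that by auto
  have diffh: "h differentiable_on ?ST"
    unfolding h_def using qnz
    by (fastforce intro: derivative_intros diffq differentiable_on_compose [OF diffq])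
  have conth: "continuous_on ?ST h"
    using differentiable_imp_continuous_on diffh by blast
  have conT0: "continuous_on (T - {0}) (\<lambda>y. inverse(norm y) *\<^sub>R y)"
    by (intro continuous_intros) auto
  have sub0T: "(\<lambda>y. inverse(norm y) *\<^sub>R y) \<in> (T - {0}) \<rightarrow> ?ST"
    using ST by (fastforce simp: subspace_mul)
  have homFq: "homotopic_with_canon (\<lambda>z. True) ?ST (T - {0}) F q"
  proof (rule homotopic_with_linear [OF contF contq])
    fix x assume x: "x \<in> ?ST"
    have "0 \<notin> closed_segment (F x) (q x)"
      using q12[OF x] Fn[OF x] by (auto simp: norm_minus_commute dest: segment_bound)
    moreover have "closed_segment (F x) (q x) \<subseteq> T"
      using Fn[OF x] qT[OF x] ST
      by (metis closed_segment_subset subspace_imp_convex)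
    ultimately show "closed_segment (F x) (q x) \<subseteq> T - {0}" by blast
  qed
  have homFh: "homotopic_with_canon (\<lambda>z. True) ?ST ?ST F h"
    using homotopic_with_compose_continuous_left [OF homFq conT0 sub0T]
    by (rule homotopic_with_eq) (auto simp: h_def Fn)
  have SST: "sphere 0 1 \<inter> S \<subseteq> ?ST" using ST by auto
  have "h ` (sphere 0 1 \<inter> S) \<noteq> ?ST"
    by (rule spheremap_lemma1 [OF ST]) (rule differentiable_on_subset [OF diffh SST])
  moreover have "h ` (sphere 0 1 \<inter> S) \<subseteq> ?ST" using hST SST by auto
  ultimately obtain d where d: "d \<in> ?ST" "d \<notin> h ` (sphere 0 1 \<inter> S)" by blast
  have dn: "- d \<notin> h ` (sphere 0 1 \<inter> S)"
  proof
    assume "- d \<in> h ` (sphere 0 1 \<inter> S)"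
    then obtain x where "x \<in> sphere 0 1 \<inter> S" "- d = h x" by auto
    then have "- x \<in> sphere 0 1 \<inter> S" "d = h (- x)" using ST by (auto simp: hodd subspace_neg) (metis minus_minus)
    then show False using d by auto
  qed
  have dd: "d \<bullet> d = 1" using d by (simp add: dot_square_norm)
  have xe: "\<bar>x \<bullet> e\<bar> \<le> 1" if "x \<in> ?ST" for x
    using Cauchy_Schwarz_ineq2[of x e] that e by auto
  have xe2: "0 \<le> 1 - (x \<bullet> e)^2" "1 - (x \<bullet> e)^2 \<le> 1" if "x \<in> ?ST" for x
    using xe[OF that] by (auto simp: abs_square_le_1)
  define G' where "G' \<equiv> \<lambda>x. h x - ((1 - (x \<bullet> e)^2) * (h x \<bullet> d)) *\<^sub>R d"
  have key: "h x - (c * (h x \<bullet> d)) *\<^sub>R d \<noteq> 0" if x: "x \<in> ?ST" and c: "0 \<le> c" "c \<le> 1"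
     and c1: "c = 1 \<Longrightarrow> (x \<bullet> e) = 0" for x c
  proof
    assume eq: "h x - (c * (h x \<bullet> d)) *\<^sub>R d = 0"
    then have hx: "h x = (c * (h x \<bullet> d)) *\<^sub>R d" by simp
    then have "h x \<bullet> d = c * (h x \<bullet> d)" 
      by (metis dd inner_scaleR_left mult.right_neutral)
    moreover have "h x \<noteq> 0" using hST[OF x] by auto
    ultimately have "c = 1" using hx by auto
    then have "x \<in> S" using c1 eS x by auto
    then have xS: "x \<in> sphere 0 1 \<inter> S" using x by auto
    have "norm (h x) = 1" using hST[OF x] by auto
    then have "1 = norm ((c * (h x \<bullet> d)) *\<^sub>R d)" using hx by metis
    then have "\<bar>h x \<bullet> d\<bar> = 1" using \<open>c = 1\<close> d by simp
    then have "h x = d \<or> h x = - d" using hx \<open>c = 1\<close>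
      by (cases "h x \<bullet> d \<ge> 0") auto
    then show False using d(2) dn xS by (metis image_eqI)
  qed
  have contG': "continuous_on ?ST G'"
    unfolding G'_def by (intro continuous_intros conth)
  have homhG': "homotopic_with_canon (\<lambda>z. True) ?ST (T - {0}) h G'"
  proof (rule homotopic_with_linear [OF conth contG'])
    fix x assume x: "x \<in> ?ST"
    show "closed_segment (h x) (G' x) \<subseteq> T - {0}"
    proof
      fix z assume "z \<in> closed_segment (h x) (G' x)"
      then obtain u where u: "0 \<le> u" "u \<le> 1" and z: "z = (1 - u) *\<^sub>R h x + u *\<^sub>R G' x"
        by (auto simp: closed_segment_def)
      have z': "z = h x - ((u * (1 - (x \<bullet> e)^2)) * (h x \<bullet> d)) *\<^sub>R d"
        unfolding z G'_def by (simp add: algebra_simps)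
      have "z \<noteq> 0" unfolding z'
      proof (rule key [OF x])
        show "0 \<le> u * (1 - (x \<bullet> e)\<^sup>2)" using u xe2[OF x] by simp
        show "u * (1 - (x \<bullet> e)\<^sup>2) \<le> 1" using u xe2[OF x] by (simp add: mult_le_one)
        show "x \<bullet> e = 0" if "u * (1 - (x \<bullet> e)\<^sup>2) = 1"
        proof -
          have "1 - (x \<bullet> e)\<^sup>2 \<ge> 1"
            using that u xe2[OF x] by (metis mult_le_one mult_left_le_one_le not_le order_antisym_conv)
          then show ?thesis by simp
        qed
      qed
      moreover have "z \<in> T" unfolding z' using hST[OF x] d ST
        by (auto intro!: subspace_diff subspace_scale)
      ultimately show "z \<in> T - {0}" by blast
    qed
  qed
  define G where "G \<equiv> \<lambda>x. inverse (norm (G' x)) *\<^sub>R G' x"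
  have G'nz: "G' x \<noteq> 0" if x: "x \<in> ?ST" for x
    unfolding G'_def using xe2[OF x] by (intro key [OF x]) auto
  have G'T: "G' x \<in> T" if x: "x \<in> ?ST" for x
    unfolding G'_def using hST[OF x] d ST by (auto intro!: subspace_diff subspace_scale)
  have homhG: "homotopic_with_canon (\<lambda>z. True) ?ST ?ST h G"
    using homotopic_with_compose_continuous_left [OF homhG' conT0 sub0T]
    by (rule homotopic_with_eq) (auto simp: G_def hn)
  show thesis
  proof
    show "continuous_on ?ST G"
      unfolding G_def using G'nz by (intro continuous_intros contG') auto
    show "G \<in> ?ST \<rightarrow> ?ST"
      unfolding G_def using G'nz G'T ST by (auto intro: subspace_scale)
    show "G (- x) = - G x" if "x \<in> ?ST" for x
    proof -
      have "G' (- x) = - G' x" by (simp add: G'_def hodd algebra_simps)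
      then show ?thesis by (simp add: G_def)
    qed
    show "homotopic_with_canon (\<lambda>z. True) ?ST ?ST F G"
      using homFh homhG by (rule homotopic_with_trans)
    show "d \<in> ?ST" by (rule d)
    show "G x \<bullet> d = 0" if x: "x \<in> sphere 0 1 \<inter> S" for x
    proof -
      have "x \<bullet> e = 0"
        using Se x by auto
      then show ?thesis by (simp add: G_def G'_def dd inner_diff_left)
    qed
  qed
qed


definition rfl :: "'a::euclidean_space \<Rightarrow> 'a \<Rightarrow> 'a" where
  "rfl u x = x - (2 * (x \<bullet> u) / (u \<bullet> u)) *\<^sub>R u"

lemma rfl_neg: "rfl u (- x) = - rfl u x"
proof -
  have "(2 * ((- x) \<bullet> u) / (u \<bullet> u)) = - (2 * (x \<bullet> u) / (u \<bullet> u))" by simp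
  then show ?thesis unfolding rfl_def by (simp only:) (simp add: algebra_simps)
qed

lemma continuous_on_rfl: "continuous_on A (rfl u)"
proof (cases "u = 0")
  case True then show ?thesis by (simp add: rfl_def continuous_on_id)
next
  case False then show ?thesis unfolding rfl_def by (intro continuous_intros) auto
qed

lemma rfl_inner_u: "rfl u x \<bullet> u = - (x \<bullet> u)"
proof (cases "u = 0")
  case True then show ?thesis by (simp add: rfl_def)
next
  case False
  then have "u \<bullet> u \<noteq> 0" by simp
  then show ?thesis by (simp add: rfl_def inner_diff_left)
qed

lemma rfl_rfl: "rfl u (rfl u x) = x"
proof (cases "u = 0")
  case True then show ?thesis by (simp add: rfl_def)
next
  case False
  have "rfl u (rfl u x) = rfl u x - (2 * (rfl u x \<bullet> u) / (u \<bullet> u)) *\<^sub>R u"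
    by (simp add: rfl_def[of u "rfl u x"])
  also have "\<dots> = x" unfolding rfl_inner_u by (simp add: rfl_def)
  finally show ?thesis .
qed

lemma rfl_norm: "norm (rfl u x) = norm x"
proof (cases "u = 0")
  case True then show ?thesis by (simp add: rfl_def)
next
  case False
  have uu: "u \<bullet> u \<noteq> 0" using False by simp
  have "norm (rfl u x) ^ 2 = rfl u x \<bullet> rfl u x" by (simp add: dot_square_norm)
  also have "\<dots> = x \<bullet> x"
    using uu
    by (simp add: rfl_def inner_diff_left inner_diff_right inner_commute[of u x] field_simps power2_eq_square)
  finally have "norm (rfl u x) ^ 2 = norm x ^ 2" by (simp add: dot_square_norm)
  then show ?thesis by (simp add: power2_eq_iff_nonneg)
qed

lemma rfl_subspace:
  assumes "subspace T" "u \<in> T" "x \<in> T"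
  shows "rfl u x \<in> T"
  unfolding rfl_def using assms by (intro subspace_diff subspace_scale) auto

lemma rfl_perp:
  assumes "norm d = 1" "norm e = 1" "x \<bullet> d = 0"
  shows "rfl (d - e) x \<bullet> e = 0"
proof (cases "d - e = 0")
  case True then show ?thesis using assms by (simp add: rfl_def)
next
  case False
  define u where "u = d - e"
  have dd: "d \<bullet> d = 1" "e \<bullet> e = 1" using assms by (simp_all add: dot_square_norm)
  have uu: "u \<bullet> u = 2 - 2 * (d \<bullet> e)"
    using dd by (simp add: u_def inner_diff_left inner_diff_right inner_commute)
  have ue1: "u \<bullet> e = d \<bullet> e - 1" using dd by (simp add: u_def inner_diff_left)
  have ue: "u \<bullet> e = - ((u \<bullet> u) / 2)"
    unfolding ue1 uu by (simp add: field_simps)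
  have nz: "u \<bullet> u \<noteq> 0" using False by (simp add: u_def)
  have "rfl u x \<bullet> e = x \<bullet> e - (2 * (x \<bullet> u) / (u \<bullet> u)) * (u \<bullet> e)"
    by (simp add: rfl_def inner_diff_left)
  also have "\<dots> = x \<bullet> e + x \<bullet> u" unfolding ue using nz by (simp add: field_simps)
  also have "\<dots> = 0" using assms by (simp add: u_def inner_diff_right)
  finally show ?thesis unfolding u_def .
qed



definition orthn :: "(nat \<Rightarrow> 'a::euclidean_space) \<Rightarrow> nat \<Rightarrow> bool" where
  "orthn b M \<longleftrightarrow> (\<forall>i\<le>M. \<forall>j\<le>M. b i \<bullet> b j = (if i = j then 1 else 0))"

definition TT :: "(nat \<Rightarrow> 'a::euclidean_space) \<Rightarrow> nat \<Rightarrow> 'a set" where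
  "TT b m = span (b ` {..m})"

definition emb :: "(nat \<Rightarrow> 'a::euclidean_space) \<Rightarrow> nat \<Rightarrow> (nat \<Rightarrow> real) \<Rightarrow> 'a" where
  "emb b m x = (\<Sum>i\<le>m. x i *\<^sub>R b i)"

definition prj :: "(nat \<Rightarrow> 'a::euclidean_space) \<Rightarrow> nat \<Rightarrow> 'a \<Rightarrow> nat \<Rightarrow> real" where
  "prj b m y = (\<lambda>i. if i \<le> m then y \<bullet> b i else 0)"

definition NS :: "nat \<Rightarrow> (nat \<Rightarrow> real) set" where
  "NS n = {x. (\<Sum>i\<le>n. x i ^ 2) = 1 \<and> (\<forall>i>n. x i = 0)}"

definition negf :: "(nat \<Rightarrow> real) \<Rightarrow> nat \<Rightarrow> real" where
  "negf x = (\<lambda>i. - x i)"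

lemma nsphere_top: "nsphere n = top_of_set (NS n)"
  by (simp add: nsphere NS_def euclidean_product_topology)

lemma topspace_nsphere_NS [simp]: "topspace (nsphere n) = NS n"
  by (simp add: nsphere_top)

lemma inner_emb:
  assumes "orthn b M" "m \<le> M" "j \<le> m"
  shows "emb b m x \<bullet> b j = x j"
proof -
  have "emb b m x \<bullet> b j = (\<Sum>i\<le>m. x i * (b i \<bullet> b j))"
    by (simp add: emb_def inner_sum_left)
  also have "\<dots> = (\<Sum>i\<le>m. if i = j then x i else 0)"
    using assms by (intro sum.cong) (auto simp: orthn_def)
  also have "\<dots> = x j" using assms by simp
  finally show ?thesis .
qed

lemma emb_TT: "emb b m x \<in> TT b m"
  unfolding emb_def TT_def by (intro span_sum span_scale span_base) auto

lemma expand_TT: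
  assumes "orthn b M" "m \<le> M" "y \<in> TT b m"
  shows "emb b m (prj b m y) = y"
proof -
  have "y \<in> span (b ` {..m})" using assms by (simp add: TT_def)
  then show ?thesis
  proof (induction rule: span_induct_alt)
    case base
    then show ?case by (simp add: emb_def prj_def)
  next
    case (step c x y)
    then obtain j where j: "j \<le> m" "x = b j" by auto
    have "emb b m (prj b m (c *\<^sub>R x + y)) = c *\<^sub>R emb b m (prj b m x) + emb b m (prj b m y)"
      by (simp add: emb_def prj_def inner_add_left scaleR_add_left sum.distrib scaleR_sum_right)
    moreover have "emb b m (prj b m x) = x"
    proof -
      have "emb b m (prj b m x) = (\<Sum>i\<le>m. (if i = j then 1 else 0) *\<^sub>R b i)"
        unfolding emb_def prj_def using assms j
        by (intro sum.cong) (auto simp: orthn_def inner_commute)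
      also have "\<dots> = (\<Sum>i\<le>m. if i = j then b i else 0)"
        by (intro sum.cong) auto
      also have "\<dots> = x" using j by simp
      finally show ?thesis .
    qed
    ultimately show ?case using step by simp
  qed
qed

lemma norm_emb:
  assumes "orthn b M" "m \<le> M"
  shows "norm (emb b m x) ^ 2 = (\<Sum>i\<le>m. x i ^ 2)"
proof -
  have "norm (emb b m x) ^ 2 = emb b m x \<bullet> emb b m x" by (simp add: dot_square_norm)
  also have "\<dots> = (\<Sum>i\<le>m. x i * (emb b m x \<bullet> b i))"
    by (simp add: emb_def inner_sum_right)
  also have "\<dots> = (\<Sum>i\<le>m. x i ^ 2)"
    using inner_emb[OF assms] by (simp add: power2_eq_square)
  finally show ?thesis .
qed

lemma prj_emb:
  assumes "orthn b M" "m \<le> M" "\<And>i. i > m \<Longrightarrow> x i = 0"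
  shows "prj b m (emb b m x) = x"
  using inner_emb[OF assms(1,2)] assms(3) by (auto simp: prj_def not_le)

lemma emb_NS:
  assumes "orthn b M" "m \<le> M" "x \<in> NS m"
  shows "emb b m x \<in> sphere 0 1 \<inter> TT b m"
  using norm_emb[OF assms(1,2), of x] assms(3) emb_TT
  by (auto simp: NS_def power2_eq_1_iff) (metis norm_ge_zero neg_0_le_iff_le not_one_le_zero)

lemma prj_NS:
  assumes "orthn b M" "m \<le> M" "y \<in> sphere 0 1 \<inter> TT b m"
  shows "prj b m y \<in> NS m"
proof -
  have "(\<Sum>i\<le>m. prj b m y i ^ 2) = norm y ^ 2"
    using norm_emb[OF assms(1,2), of "prj b m y"] expand_TT[OF assms(1,2)] assms(3) by simp
  then show ?thesis using assms(3) by (auto simp: NS_def prj_def)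
qed

lemma emb_negf: "emb b m (negf x) = - emb b m x"
  by (simp add: emb_def negf_def sum_negf)

lemma prj_neg: "prj b m (- y) = negf (prj b m y)"
  by (auto simp: prj_def negf_def)

lemma continuous_on_emb: "continuous_on A (emb b m)"
  unfolding emb_def
  by (intro continuous_intros continuous_on_product_then_coordinatewise continuous_on_id)

lemma continuous_on_prj: "continuous_on A (prj b m)"
  unfolding prj_def
proof (intro continuous_on_coordinatewise_then_product)
  fix i show "continuous_on A (\<lambda>x. if i \<le> m then x \<bullet> b i else 0)"
    by (cases "i \<le> m") (auto intro!: continuous_intros)
qed

lemma TT_mono: "m \<le> n \<Longrightarrow> TT b m \<subseteq> TT b n"
  unfolding TT_def by (intro span_mono) auto

lemma TT_perp:
  assumes "orthn b M" "Suc m \<le> M" "y \<in> TT b m"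
  shows "y \<bullet> b (Suc m) = 0"
proof -
  have "y = emb b m (prj b m y)" using expand_TT[OF assms(1) _ assms(3)] assms(2) by simp
  then have "y \<bullet> b (Suc m) = emb b m (prj b m y) \<bullet> b (Suc m)" by simp
  also have "\<dots> = (\<Sum>i\<le>m. prj b m y i * (b i \<bullet> b (Suc m)))"
    by (simp add: emb_def inner_sum_left)
  also have "\<dots> = 0" using assms by (intro sum.neutral) (auto simp: orthn_def)
  finally show ?thesis .
qed

lemma TT_down:
  assumes "orthn b M" "Suc m \<le> M" "y \<in> TT b (Suc m)" "y \<bullet> b (Suc m) = 0"
  shows "y \<in> TT b m"
proof -
  have "y = emb b (Suc m) (prj b (Suc m) y)" using expand_TT[OF assms(1,2,3)] by simp
  also have "\<dots> = (\<Sum>i\<le>m. (y \<bullet> b i) *\<^sub>R b i)"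
    using assms(4) by (simp add: emb_def prj_def)
  also have "\<dots> \<in> TT b m"
    unfolding TT_def by (intro span_sum span_scale span_base) auto
  finally show ?thesis .
qed

lemma dim_TT_less:
  assumes "orthn b M" "Suc m \<le> M"
  shows "dim (TT b m) < dim (TT b (Suc m))"
proof -
  have m1: "b (Suc m) \<in> TT b (Suc m)" unfolding TT_def by (intro span_base) auto
  have m2: "b (Suc m) \<notin> TT b m"
  proof
    assume "b (Suc m) \<in> TT b m"
    then have "b (Suc m) \<bullet> b (Suc m) = 0" by (rule TT_perp[OF assms])
    moreover have "b (Suc m) \<bullet> b (Suc m) = 1" using assms unfolding orthn_def by simp
    ultimately show False by simp
  qed
  have "TT b m \<subset> TT b (Suc m)" using TT_mono[of m "Suc m" b] m1 m2 by auto
  then have "span (b ` {..m}) \<subset> span (b ` {..Suc m})" by (simp add: TT_def)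
  then have "dim (b ` {..m}) < dim (b ` {..Suc m})" by (rule dim_psubset)
  then show ?thesis by (simp add: TT_def dim_span)
qed

lemma NS_down:
  assumes "x \<in> NS m"
  shows "x \<in> NS (Suc m)"
  using assms by (auto simp: NS_def)

lemma emb_Suc:
  assumes "x (Suc m) = 0"
  shows "emb b (Suc m) x = emb b m x"
  using assms by (simp add: emb_def)



lemma cm_emb:
  assumes "orthn b M" "m \<le> M"
  shows "continuous_map (nsphere m) (top_of_set (sphere 0 1 \<inter> TT b m)) (emb b m)"
  unfolding nsphere_top continuous_map_subtopology_eu
  using emb_NS[OF assms] continuous_on_emb by auto

lemma cm_prj:
  assumes "orthn b M" "m \<le> M"
  shows "continuous_map (top_of_set (sphere 0 1 \<inter> TT b m)) (nsphere m) (prj b m)"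
  unfolding nsphere_top continuous_map_subtopology_eu
  using prj_NS[OF assms] continuous_on_prj by auto

lemma TR1:
  assumes "orthn b M" "m \<le> M" "continuous_on (sphere 0 1 \<inter> TT b m) F"
    "F \<in> (sphere 0 1 \<inter> TT b m) \<rightarrow> sphere 0 1 \<inter> TT b m"
  shows "continuous_map (nsphere m) (nsphere m) (prj b m \<circ> F \<circ> emb b m)"
proof -
  have "continuous_map (top_of_set (sphere 0 1 \<inter> TT b m)) (top_of_set (sphere 0 1 \<inter> TT b m)) F"
    using assms(3,4) by (simp add: continuous_map_subtopology_eu)
  then show ?thesis
    by (intro continuous_map_compose[OF cm_emb[OF assms(1,2)]] continuous_map_compose[OF _ cm_prj[OF assms(1,2)]])
qed

lemma TR2:
  assumes "orthn b M" "m \<le> M"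
    "homotopic_with_canon (\<lambda>z. True) (sphere 0 1 \<inter> TT b m) (sphere 0 1 \<inter> TT b m) F G"
  shows "homotopic_with (\<lambda>z. True) (nsphere m) (nsphere m) (prj b m \<circ> F \<circ> emb b m) (prj b m \<circ> G \<circ> emb b m)"
  by (rule homotopic_with_compose_continuous_map_right
       [OF homotopic_with_compose_continuous_map_left[OF assms(3) cm_prj[OF assms(1,2)]] cm_emb[OF assms(1,2)]]) auto



lemma NS_up:
  assumes "x \<in> NS (Suc m)" "x (Suc m) = 0"
  shows "x \<in> NS m"
  using assms by (auto simp: NS_def Suc_less_eq2 dest: Suc_lessI)

lemma NS_zero_cases:
  assumes "x \<in> NS 0"
  shows "x = (\<lambda>i. if i = 0 then 1 else 0) \<or> x = negf (\<lambda>i. if i = 0 then 1 else 0)"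
proof -
  have x0: "x 0 ^ 2 = 1" and xi: "\<And>i. i > 0 \<Longrightarrow> x i = 0" using assms by (auto simp: NS_def)
  from x0 have "x 0 = 1 \<or> x 0 = -1" by (simp add: power2_eq_1_iff)
  then show ?thesis
  proof
    assume "x 0 = 1" then show ?thesis using xi by (intro disjI1) (auto simp: fun_eq_iff)
  next
    assume "x 0 = -1" then show ?thesis using xi by (intro disjI2) (auto simp: fun_eq_iff negf_def)
  qed
qed

lemma cm_NS_iff:
  "continuous_map (nsphere m) (nsphere n) f \<longleftrightarrow> continuous_on (NS m) f \<and> f \<in> NS m \<rightarrow> NS n"
  by (simp add: nsphere_top continuous_map_subtopology_eu)

lemma odd_mult_int: "odd ((a::int) * b) \<Longrightarrow> odd b"
  by simp

theorem Q_odd_degree: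
  assumes ob: "orthn b M"
  shows "m \<le> M \<Longrightarrow> continuous_map (nsphere m) (nsphere m) f \<Longrightarrow>
         (\<forall>x\<in>NS m. f (negf x) = negf (f x)) \<Longrightarrow> odd (Brouwer_degree2 m f)"
proof (induction m arbitrary: f)
  case 0
  define e0 where "e0 = (\<lambda>i::nat. if i = 0 then 1 else (0::real))"
  have e0NS: "e0 \<in> NS 0" by (simp add: NS_def e0_def)
  have fNS: "f \<in> NS 0 \<rightarrow> NS 0" using "0.prems"(2) by (simp add: cm_NS_iff)
  then have "f e0 \<in> NS 0" using e0NS by auto
  then have "f e0 = e0 \<or> f e0 = negf e0" using NS_zero_cases unfolding e0_def by blast
  then show ?case
  proof
    assume fe: "f e0 = e0"
    have "\<And>x. x \<in> topspace (nsphere 0) \<Longrightarrow> f x = id x"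
    proof -
      fix x assume "x \<in> topspace (nsphere 0)"
      then have "x \<in> NS 0" by simp
      then have "x = e0 \<or> x = negf e0" using NS_zero_cases unfolding e0_def by blast
      then show "f x = id x" using fe "0.prems"(3) e0NS by auto
    qed
    then have "Brouwer_degree2 0 f = Brouwer_degree2 0 id" by (rule Brouwer_degree2_eq)
    then show ?thesis by simp
  next
    assume fe: "f e0 = negf e0"
    define r where "r = (\<lambda>(x::nat\<Rightarrow>real) i. if i = 0 then -x i else x i)"
    have "\<And>x. x \<in> topspace (nsphere 0) \<Longrightarrow> f x = r x"
    proof -
      fix x assume "x \<in> topspace (nsphere 0)"
      then have "x \<in> NS 0" by simp
      then have "x = e0 \<or> x = negf e0" using NS_zero_cases unfolding e0_def by blast
      moreover have "f (negf e0) = e0"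
        using fe "0.prems"(3) e0NS by (auto simp: negf_def fun_eq_iff)
      moreover have "r e0 = negf e0" "r (negf e0) = e0"
        by (auto simp: r_def e0_def negf_def fun_eq_iff)
      ultimately show "f x = r x" using fe by auto
    qed
    then have "Brouwer_degree2 0 f = Brouwer_degree2 0 r" by (rule Brouwer_degree2_eq)
    also have "\<dots> = -1" unfolding r_def by (rule Brouwer_degree2_reflection)
    finally show ?thesis by simp
  qed
next
  case (Suc m)
  let ?n = "Suc m"
  have mM: "m \<le> M" and nM: "?n \<le> M" using Suc.prems by auto
  have fc: "continuous_on (NS ?n) f" and fNS: "f \<in> NS ?n \<rightarrow> NS ?n"
    using Suc.prems(2) by (auto simp: cm_NS_iff)
  have fodd: "\<And>x. x \<in> NS ?n \<Longrightarrow> f (negf x) = negf (f x)" using Suc.prems(3) by auto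
  let ?T = "TT b ?n" and ?S = "TT b m"
  let ?ST = "sphere (0::'a) 1 \<inter> ?T"
  define F where "F = emb b ?n \<circ> f \<circ> prj b ?n"
  have prjST: "prj b ?n y \<in> NS ?n" if "y \<in> ?ST" for y using prj_NS[OF ob nM that] .
  have embNS: "emb b ?n x \<in> ?ST" if "x \<in> NS ?n" for x using emb_NS[OF ob nM that] .
  have contF: "continuous_on ?ST F"
    unfolding F_def
    by (intro continuous_on_compose continuous_on_prj continuous_on_emb
          continuous_on_subset[OF fc]) (auto simp: prjST)
  have Fim: "F \<in> ?ST \<rightarrow> ?ST"
  proof
    fix x assume "x \<in> ?ST"
    then have "f (prj b ?n x) \<in> NS ?n" using prjST fNS by blast
    then show "F x \<in> ?ST" unfolding F_def using embNS by simp
  qed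
  have Fodd: "F (- x) = - F x" if "x \<in> ?ST" for x
    unfolding F_def using fodd[OF prjST[OF that]] by (simp add: prj_neg emb_negf)
  have bn: "b ?n \<in> ?T" unfolding TT_def by (intro span_base) auto
  have nbn: "norm (b ?n) = 1"
    using ob nM unfolding orthn_def by (simp add: norm_eq_sqrt_inner)
  obtain G d where Gc: "continuous_on ?ST G" and Gim: "G \<in> ?ST \<rightarrow> ?ST"
    and Godd: "\<And>x. x \<in> ?ST \<Longrightarrow> G (- x) = - G x"
    and homFG: "homotopic_with_canon (\<lambda>z. True) ?ST ?ST F G"
    and d: "d \<in> ?ST" and Gd: "\<And>x. x \<in> sphere 0 1 \<inter> ?S \<Longrightarrow> G x \<bullet> d = 0"
  proof (rule euc_step [OF subspace_span[of "b ` {..m}", folded TT_def] subspace_span[of "b ` {..?n}", folded TT_def]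
        dim_TT_less[OF ob nM] TT_mono[of m ?n b] bn nbn _ _ contF Fim Fodd])
    show "\<And>x. x \<in> ?T \<Longrightarrow> x \<bullet> b ?n = 0 \<Longrightarrow> x \<in> ?S" using TT_down[OF ob nM] by blast
    show "\<And>x. x \<in> ?S \<Longrightarrow> x \<bullet> b ?n = 0" using TT_perp[OF ob nM] by blast
  qed auto
  define R where "R = rfl (d - b ?n)"
  have uT: "d - b ?n \<in> ?T" using d bn unfolding TT_def by (auto intro: span_diff)
  have Rc: "continuous_on ?ST R" unfolding R_def by (rule continuous_on_rfl)
  have Rim: "R \<in> ?ST \<rightarrow> ?ST"
    unfolding R_def using rfl_subspace[OF subspace_span uT[unfolded TT_def]]
    by (auto simp: TT_def rfl_norm)
  define g where "g = prj b ?n \<circ> G \<circ> emb b ?n"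
  define \<rho> where "\<rho> = prj b ?n \<circ> R \<circ> emb b ?n"
  define k where "k = \<rho> \<circ> g"
  have cg: "continuous_map (nsphere ?n) (nsphere ?n) g"
    unfolding g_def by (rule TR1[OF ob nM Gc Gim])
  have c\<rho>: "continuous_map (nsphere ?n) (nsphere ?n) \<rho>"
    unfolding \<rho>_def by (rule TR1[OF ob nM Rc Rim])
  have ck: "continuous_map (nsphere ?n) (nsphere ?n) k"
    unfolding k_def by (rule continuous_map_compose[OF cg c\<rho>])
  have degfF: "Brouwer_degree2 ?n f = Brouwer_degree2 ?n (prj b ?n \<circ> F \<circ> emb b ?n)"
  proof (rule Brouwer_degree2_eq)
    fix x assume "x \<in> topspace (nsphere ?n)"
    then have x: "x \<in> NS ?n" by simp
    then have "prj b ?n (emb b ?n x) = x" by (intro prj_emb[OF ob nM]) (auto simp: NS_def)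
    moreover have "prj b ?n (emb b ?n (f x)) = f x"
      using fNS x by (intro prj_emb[OF ob nM]) (auto simp: NS_def)
    ultimately show "f x = (prj b ?n \<circ> F \<circ> emb b ?n) x" by (simp add: F_def)
  qed
  also have "\<dots> = Brouwer_degree2 ?n g"
    unfolding g_def by (rule Brouwer_degree2_homotopic[OF TR2[OF ob nM homFG]])
  finally have degfg: "Brouwer_degree2 ?n f = Brouwer_degree2 ?n g" .
  have embprj: "emb b ?n (prj b ?n y) = y" if "y \<in> ?ST" for y
    using expand_TT[OF ob nM] that by auto
  have "Brouwer_degree2 ?n (\<rho> \<circ> \<rho>) = Brouwer_degree2 ?n id"
  proof (rule Brouwer_degree2_eq)
    fix x assume "x \<in> topspace (nsphere ?n)"
    then have x: "x \<in> NS ?n" by simp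
    have "R (emb b ?n x) \<in> ?ST" using Rim embNS[OF x] by auto
    then have "emb b ?n (\<rho> x) = R (emb b ?n x)" by (simp add: \<rho>_def embprj)
    then have "\<rho> (\<rho> x) = prj b ?n (emb b ?n x)" by (simp add: \<rho>_def R_def rfl_rfl)
    also have "\<dots> = x" using x by (intro prj_emb[OF ob nM]) (auto simp: NS_def)
    finally show "(\<rho> \<circ> \<rho>) x = id x" by simp
  qed
  then have "Brouwer_degree2 ?n \<rho> * Brouwer_degree2 ?n \<rho> = 1"
    using Brouwer_degree2_compose[OF c\<rho> c\<rho>] by simp
  have degk: "Brouwer_degree2 ?n k = Brouwer_degree2 ?n \<rho> * Brouwer_degree2 ?n g"
    unfolding k_def by (rule Brouwer_degree2_compose[OF cg c\<rho>])
  have kodd: "k (negf x) = negf (k x)" if "x \<in> NS ?n" for x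
  proof -
    have "g (negf x) = negf (g x)"
      using Godd[OF embNS[OF that]] by (simp add: g_def emb_negf prj_neg)
    moreover have "\<rho> (negf y) = negf (\<rho> y)" for y
      by (simp add: \<rho>_def R_def emb_negf prj_neg rfl_neg)
    ultimately show ?thesis by (simp add: k_def)
  qed
  have kNS: "k x \<in> NS m" if x: "x \<in> NS m" for x
  proof -
    have xn: "x \<in> NS ?n" using NS_down[OF x] .
    have "x ?n = 0" using x by (auto simp: NS_def)
    then have "emb b ?n x = emb b m x" by (rule emb_Suc)
    then have exS: "emb b ?n x \<in> sphere 0 1 \<inter> ?S" using emb_NS[OF ob mM x] by simp
    define y where "y = G (emb b ?n x)"
    have y: "y \<in> ?ST" "y \<bullet> d = 0" using Gim embNS[OF xn] Gd[OF exS] by (auto simp: y_def)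
    have "emb b ?n (prj b ?n (G (emb b ?n x))) = G (emb b ?n x)"
      using embprj[OF y(1)] by (simp add: y_def)
    then have ky: "k x = prj b ?n (R y)" by (simp add: k_def \<rho>_def g_def y_def)
    have Ry: "R y \<in> ?ST" using Rim y by auto
    have "R y \<bullet> b ?n = 0" unfolding R_def
      by (rule rfl_perp) (use d nbn y in auto)
    then have "prj b ?n (R y) ?n = 0" by (simp add: prj_def)
    moreover have "prj b ?n (R y) \<in> NS ?n" using prjST[OF Ry] .
    ultimately show ?thesis using ky NS_up by auto
  qed
  have NSsub: "NS m \<subseteq> NS ?n" using NS_down by auto
  have ckm: "continuous_map (nsphere m) (nsphere m) k"
    using ck kNS NSsub by (auto simp: cm_NS_iff intro: continuous_on_subset)
  have "odd (Brouwer_degree2 m k)"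
    using Suc.IH[OF mM ckm] kodd NSsub by auto
  moreover have "even (Brouwer_degree2 ?n k - Brouwer_degree2 (?n - Suc 0) k)"
  proof (rule Borsuk_odd_mapping_degree_step[OF ck])
    show "\<And>u. u \<in> topspace (nsphere ?n) \<Longrightarrow> (k \<circ> (\<lambda>x i. - x i)) u = ((\<lambda>x i. - x i) \<circ> k) u"
      using kodd by (simp add: negf_def)
    show "k \<in> topspace (nsphere (?n - Suc 0)) \<rightarrow> topspace (nsphere (?n - Suc 0))"
      using kNS by auto
  qed
  ultimately have "odd (Brouwer_degree2 ?n k)" by simp
  then have "odd (Brouwer_degree2 ?n g)" using degk by simp
  then show ?case using degfg by simp
qed



theorem no_odd_equator:
  assumes ob: "orthn b M" and n: "n = Suc m" "m \<le> M"
    and ch: "continuous_map (nsphere n) (nsphere n) h"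
    and hodd: "\<forall>x\<in>NS n. h (negf x) = negf (h x)"
    and him: "h \<in> NS n \<rightarrow> NS m"
  shows False
proof -
  define en where "en = (\<lambda>i::nat. if i = n then 1 else (0::real))"
  have "(\<Sum>i\<le>n. (en i)\<^sup>2) = (\<Sum>i\<le>n. if i = n then 1 else 0)"
    by (intro sum.cong) (auto simp: en_def)
  then have enNS: "en \<in> NS n" by (simp add: NS_def en_def)
  have "en \<notin> NS m" using n by (auto simp: NS_def en_def)
  then have "h ` topspace (nsphere n) \<noteq> topspace (nsphere n)"
    using him enNS by (metis Pi_iff image_iff topspace_nsphere_NS)
  then have d0: "Brouwer_degree2 n h = 0" by (rule Brouwer_degree2_nonsurjective[OF ch])
  have NSsub: "NS m \<subseteq> NS n" using NS_down n by auto
  have chm: "continuous_map (nsphere m) (nsphere m) h"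
    using ch him NSsub by (auto simp: cm_NS_iff intro: continuous_on_subset)
  have "odd (Brouwer_degree2 m h)"
    using Q_odd_degree[OF ob n(2) chm] hodd NSsub by auto
  moreover have "even (Brouwer_degree2 n h - Brouwer_degree2 (n - Suc 0) h)"
  proof (rule Borsuk_odd_mapping_degree_step[OF ch])
    show "\<And>u. u \<in> topspace (nsphere n) \<Longrightarrow> (h \<circ> (\<lambda>x i. - x i)) u = ((\<lambda>x i. - x i) \<circ> h) u"
      using hodd by (simp add: negf_def)
    show "h \<in> topspace (nsphere (n - Suc 0)) \<rightarrow> topspace (nsphere (n - Suc 0))"
      using him NSsub n by auto
  qed
  ultimately show False using d0 n by simp
qed



lemma pow_inv_lemma:
  fixes c p :: real
  assumes "c > 0" "p > 0"
  shows "c * (c powr (-1/p)) powr p = 1" "(c powr (-1/p)) powr p * c = 1"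
proof -
  have "(c powr (-1/p)) powr p = c powr ((-1/p) * p)" by (rule powr_powr)
  also have "(-1/p) * p = -1" using assms by simp
  also have "c powr (-1) = inverse c" using assms by (simp add: powr_minus)
  finally show "c * (c powr (-1/p)) powr p = 1" "(c powr (-1/p)) powr p * c = 1"
    using assms by auto
qed

lemma sphere_p_axis:
  fixes \<mu> :: "'v::finite \<Rightarrow> real"
  assumes "\<mu> v > 0" "p > 0"
  shows "axis v (\<mu> v powr (-1/p)) \<in> sphere_p \<mu> p"
proof -
  have "(\<Sum>i\<in>UNIV. \<mu> i * \<bar>axis v (\<mu> v powr (-1/p)) $ i\<bar> powr p) = \<mu> v * (\<mu> v powr (-1/p)) powr p"
    by (subst sum.remove[of _ v]) (auto simp: axis_def intro!: sum.neutral)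
  also have "\<dots> = 1" using pow_inv_lemma(1)[of "\<mu> v" p] assms by simp
  finally show ?thesis by (simp add: sphere_p_def)
qed

lemma genus_lower:
  fixes \<mu> :: "'v::finite \<Rightarrow> real" and S' :: "'v set"
  assumes \<mu>: "\<forall>i. \<mu> i > 0" and p: "p > 0" and k: "card S' = k" and mk: "m < k"
  shows "\<not> genus_le {f \<in> sphere_p \<mu> p. \<forall>i. i \<notin> S' \<longrightarrow> f$i = 0} m"
proof
  define Bs where "Bs = {f \<in> sphere_p \<mu> p. \<forall>i. i \<notin> S' \<longrightarrow> f$i = 0}"
  assume "genus_le {f \<in> sphere_p \<mu> p. \<forall>i. i \<notin> S' \<longrightarrow> f$i = 0} m"
  then obtain g :: "nat \<Rightarrow> real^'v \<Rightarrow> real"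
    where gc: "\<And>i. i < m \<Longrightarrow> continuous_on Bs (g i)"
      and godd: "\<And>i x. i < m \<Longrightarrow> x \<in> Bs \<Longrightarrow> g i (- x) = - g i x"
      and gnz: "\<And>x. x \<in> Bs \<Longrightarrow> \<exists>i<m. g i x \<noteq> 0"
    unfolding genus_le_def Bs_def by blast
  obtain s where s: "bij_betw s {0..<k} S'"
    using ex_bij_betw_nat_finite[of S'] k by auto
  have "S' \<noteq> {}" using k mk by auto
  then obtain v where v: "v \<in> S'" by auto
  have "axis v (\<mu> v powr (-1/p)) \<in> Bs"
    using sphere_p_axis[of \<mu> v p] \<mu> p v by (auto simp: Bs_def axis_def)
  then have "m \<noteq> 0" using gnz by fastforce
  then obtain n0 where kn: "k = Suc (Suc n0)" using mk by (cases k; cases "k - 1") auto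
  define n where "n = Suc n0"
  have mn: "m \<le> n" using mk kn n_def by simp
  define b where "b = (\<lambda>i. axis (s i) (1::real) :: real^'v)"
  have sinj: "\<And>i j. i \<le> n \<Longrightarrow> j \<le> n \<Longrightarrow> s i = s j \<longleftrightarrow> i = j"
    using s kn n_def unfolding bij_betw_def inj_on_def by auto
  have ob: "orthn b n"
    unfolding orthn_def b_def using sinj by (auto simp: inner_axis_axis)
  have sS: "\<And>i. i \<le> n \<Longrightarrow> s i \<in> S'"
    using s kn n_def unfolding bij_betw_def by auto
  define Y where "Y = emb b n"
  define P where "P = (\<lambda>y::real^'v. \<Sum>v\<in>UNIV. \<mu> v * \<bar>y$v\<bar> powr p)"
  define \<Psi> where "\<Psi> = (\<lambda>x. (P (Y x) powr (-1/p)) *\<^sub>R Y x)"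
  have Ysupp: "Y x $ v = 0" if "v \<notin> S'" for x v
  proof -
    have "Y x $ v = (\<Sum>i\<le>n. x i * (b i $ v))" by (simp add: Y_def emb_def)
    also have "\<dots> = 0" using sS that by (intro sum.neutral) (auto simp: b_def axis_def)
    finally show ?thesis .
  qed
  have Ynz: "Y x \<noteq> 0" if "x \<in> NS n" for x
    using emb_NS[OF ob order_refl that] by (auto simp: Y_def)
  have Ppos: "P y > 0" if "y \<noteq> 0" for y
  proof -
    have "\<exists>v. y $ v \<noteq> 0" using that by (simp add: vec_eq_iff)
    then obtain v where "y $ v \<noteq> 0" by blast
    then show ?thesis unfolding P_def using \<mu> p
      by (intro sum_pos2[of UNIV v]) (auto simp: less_imp_le)
  qed
  have Pneg: "P (- y) = P y" for y by (simp add: P_def)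
  have \<Psi>sp: "\<Psi> x \<in> sphere_p \<mu> p" if x: "x \<in> NS n" for x
  proof -
    let ?c = "P (Y x) powr (-1/p)"
    have P0: "P (Y x) > 0" using Ppos Ynz x by auto
    have "(\<Sum>i\<in>UNIV. \<mu> i * \<bar>\<Psi> x $ i\<bar> powr p) = (\<Sum>i\<in>UNIV. ?c powr p * (\<mu> i * \<bar>Y x $ i\<bar> powr p))"
      unfolding \<Psi>_def using P0 by (intro sum.cong) (auto simp: abs_mult powr_mult)
    also have "\<dots> = ?c powr p * P (Y x)" by (simp add: P_def sum_distrib_left)
    also have "\<dots> = 1" using pow_inv_lemma(2)[OF P0 p] .
    finally show ?thesis by (simp add: sphere_p_def)
  qed
  have \<Psi>Bs: "\<Psi> x \<in> Bs" if "x \<in> NS n" for x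
    using \<Psi>sp[OF that] Ysupp by (auto simp: Bs_def \<Psi>_def)
  have \<Psi>odd: "\<Psi> (negf x) = - \<Psi> x" for x
    by (simp add: \<Psi>_def Y_def emb_negf Pneg)
  have contY: "continuous_on A Y" for A unfolding Y_def by (rule continuous_on_emb)
  have contPY: "continuous_on A (\<lambda>x. P (Y x))" for A
    unfolding P_def using p
    by (intro continuous_intros continuous_on_powr' contY) auto
  have cont\<Psi>: "continuous_on (NS n) \<Psi>"
    unfolding \<Psi>_def using Ppos Ynz
    by (intro continuous_intros contPY contY) (metis less_irrefl)
  define a where "a = (\<lambda>i x. g i (\<Psi> x))"
  have ac: "continuous_on (NS n) (a i)" if "i < m" for i
    unfolding a_def using \<Psi>Bs
    by (intro continuous_on_compose2[OF gc[OF that] cont\<Psi>]) auto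
  have aodd: "a i (negf x) = - a i x" if "i < m" "x \<in> NS n" for i x
    unfolding a_def \<Psi>odd using godd[OF that(1) \<Psi>Bs[OF that(2)]] .
  define Q where "Q = (\<lambda>x. \<Sum>l<m. (a l x)^2)"
  have Qpos: "Q x > 0" if x: "x \<in> NS n" for x
  proof -
    obtain i where "i < m" "a i x \<noteq> 0" using gnz[OF \<Psi>Bs[OF x]] by (auto simp: a_def)
    then show ?thesis unfolding Q_def by (intro sum_pos2[of _ i]) auto
  qed
  have Qodd: "Q (negf x) = Q x" if "x \<in> NS n" for x
    unfolding Q_def using aodd that by (intro sum.cong) auto
  define h where "h = (\<lambda>x j. if j < m then a j x / sqrt (Q x) else 0)"
  have hNS: "h x \<in> NS n0" if x: "x \<in> NS n" for x
  proof -
    have "(\<Sum>j\<le>n0. (h x j)^2) = (\<Sum>j<m. (h x j)^2)"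
      using mn n_def by (intro sum.mono_neutral_right) (auto simp: h_def)
    also have "\<dots> = (\<Sum>j<m. (a j x)^2 / Q x)"
      using Qpos[OF x] by (intro sum.cong) (auto simp: h_def power_divide)
    also have "\<dots> = 1" using Qpos[OF x] by (simp add: Q_def flip: sum_divide_distrib)
    finally show ?thesis using mn n_def by (auto simp: NS_def h_def)
  qed
  have hodd: "\<forall>x\<in>NS n. h (negf x) = negf (h x)"
    using aodd Qodd by (auto simp: h_def negf_def fun_eq_iff)
  have hc: "continuous_on (NS n) h"
  proof (intro continuous_on_coordinatewise_then_product)
    fix j show "continuous_on (NS n) (\<lambda>x. h x j)"
    proof (cases "j < m")
      case True
      have "continuous_on (NS n) Q" unfolding Q_def using ac by (intro continuous_intros) auto
      then have "continuous_on (NS n) (\<lambda>x. a j x / sqrt (Q x))"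
        using True Qpos by (intro continuous_intros ac) (auto, metis less_irrefl)
      then show ?thesis using True unfolding h_def by simp
    qed (simp add: h_def)
  qed
  have "NS n0 \<subseteq> NS n" using NS_down n_def by auto
  then have ch: "continuous_map (nsphere n) (nsphere n) h"
    using hc hNS by (auto simp: cm_NS_iff)
  show False
    by (rule no_odd_equator[OF ob n_def order_refl[of n0, THEN le_SucI, folded n_def] ch hodd]) (use hNS in auto)
qed



context
  fixes adj :: "'v::finite \<Rightarrow> 'v \<Rightarrow> bool" and \<sigma> w :: "'v \<Rightarrow> 'v \<Rightarrow> real"
    and \<mu> \<kappa> :: "'v \<Rightarrow> real" and p :: real
  assumes sig: "is_signature adj \<sigma>" and wt: "is_edge_weight adj w" and \<mu>: "\<forall>i. \<mu> i > 0"
    and p1: "p \<ge> 1"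
begin

definition "K\<kappa> = (\<Sum>i\<in>UNIV. \<bar>\<kappa> i\<bar> / \<mu> i)"

lemma coord_bound:
  assumes "f \<in> sphere_p \<mu> p"
  shows "\<bar>f$i\<bar> powr p \<le> 1 / \<mu> i"
proof -
  have "\<mu> i * \<bar>f$i\<bar> powr p \<le> (\<Sum>j\<in>UNIV. \<mu> j * \<bar>f$j\<bar> powr p)"
    by (rule member_le_sum) (use \<mu> in \<open>auto simp: less_imp_le\<close>)
  then have "\<mu> i * \<bar>f$i\<bar> powr p \<le> 1" using assms by (simp add: sphere_p_def)
  then show ?thesis using \<mu> by (simp add: field_simps mult.commute)
qed

lemma rayleigh_sphere:
  assumes "f \<in> sphere_p \<mu> p"
  shows "rayleigh adj \<sigma> w \<mu> \<kappa> p f =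
    (1/2) * (\<Sum>(i,j)\<in>{(i,j). adj i j}. w i j * \<bar>f$i - \<sigma> i j * f$j\<bar> powr p)
      + (\<Sum>i\<in>UNIV. \<kappa> i * \<bar>f$i\<bar> powr p)"
  using assms by (simp add: rayleigh_def sphere_p_def)

lemma kappa_bound:
  assumes "f \<in> sphere_p \<mu> p"
  shows "\<bar>\<Sum>i\<in>UNIV. \<kappa> i * \<bar>f$i\<bar> powr p\<bar> \<le> K\<kappa>"
proof -
  have "\<bar>\<Sum>i\<in>UNIV. \<kappa> i * \<bar>f$i\<bar> powr p\<bar> \<le> (\<Sum>i\<in>UNIV. \<bar>\<kappa> i * \<bar>f$i\<bar> powr p\<bar>)"
    by (rule sum_abs)
  also have "\<dots> \<le> (\<Sum>i\<in>UNIV. \<bar>\<kappa> i\<bar> / \<mu> i)"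
  proof (rule sum_mono)
    fix i :: 'v
    have "\<bar>\<kappa> i * \<bar>f$i\<bar> powr p\<bar> = \<bar>\<kappa> i\<bar> * \<bar>f$i\<bar> powr p" by (simp add: abs_mult)
    also have "\<dots> \<le> \<bar>\<kappa> i\<bar> * (1 / \<mu> i)"
      by (intro mult_left_mono coord_bound assms) auto
    finally show "\<bar>\<kappa> i * \<bar>f$i\<bar> powr p\<bar> \<le> \<bar>\<kappa> i\<bar> / \<mu> i" by simp
  qed
  finally show ?thesis by (simp add: K\<kappa>_def)
qed

lemma edge_nonneg:
  "0 \<le> (\<Sum>(i,j)\<in>{(i,j). adj i j}. w i j * \<bar>f$i - \<sigma> i j * f$j\<bar> powr p)"
  using wt by (intro sum_nonneg) (auto simp: is_edge_weight_def less_imp_le)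

lemma rayleigh_lower:
  assumes "f \<in> sphere_p \<mu> p"
  shows "- K\<kappa> \<le> rayleigh adj \<sigma> w \<mu> \<kappa> p f"
  using rayleigh_sphere[OF assms] kappa_bound[OF assms] edge_nonneg[of f] by linarith

definition "Aa = 1 + (\<Sum>i\<in>UNIV. 1 / \<mu> i)"

lemma coord_abs_bound:
  assumes "f \<in> sphere_p \<mu> p"
  shows "\<bar>f$i\<bar> \<le> Aa"
proof -
  have s: "1 / \<mu> i \<le> (\<Sum>i\<in>UNIV. 1 / \<mu> i)"
    by (rule member_le_sum) (use \<mu> in \<open>auto intro: less_imp_le\<close>)
  show ?thesis
  proof (cases "\<bar>f$i\<bar> \<le> 1")
    case True
    have "0 \<le> (\<Sum>i\<in>UNIV. 1 / \<mu> i)" using \<mu> by (intro sum_nonneg) (auto intro: less_imp_le)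
    then show ?thesis using True by (simp add: Aa_def)
  next
    case False
    then have "\<bar>f$i\<bar> = \<bar>f$i\<bar> powr 1" by simp
    also have "\<dots> \<le> \<bar>f$i\<bar> powr p" using False p1 by (intro powr_mono) auto
    also have "\<dots> \<le> 1 / \<mu> i" by (rule coord_bound[OF assms])
    finally show ?thesis using s by (simp add: Aa_def)
  qed
qed

lemma sig_abs: "adj i j \<Longrightarrow> \<bar>\<sigma> i j\<bar> = 1"
  using sig unfolding is_signature_def by (metis abs_1 abs_minus_cancel)

lemma rayleigh_upper_gen:
  assumes "f \<in> sphere_p \<mu> p"
  shows "rayleigh adj \<sigma> w \<mu> \<kappa> p f \<le>
     (1/2) * (\<Sum>(i,j)\<in>{(i,j). adj i j}. w i j * (2 * Aa) powr p) + K\<kappa>"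
proof -
  have "(\<Sum>(i,j)\<in>{(i,j). adj i j}. w i j * \<bar>f$i - \<sigma> i j * f$j\<bar> powr p)
      \<le> (\<Sum>(i,j)\<in>{(i,j). adj i j}. w i j * (2 * Aa) powr p)"
  proof (rule sum_mono, clarify)
    fix i j assume a: "adj i j"
    have "\<bar>f$i - \<sigma> i j * f$j\<bar> \<le> \<bar>f$i\<bar> + \<bar>\<sigma> i j\<bar> * \<bar>f$j\<bar>"
      by (metis abs_mult abs_triangle_ineq4)
    also have "\<dots> \<le> 2 * Aa" using coord_abs_bound[OF assms, of i] coord_abs_bound[OF assms, of j] sig_abs[OF a]
      by simp
    finally have "\<bar>f$i - \<sigma> i j * f$j\<bar> powr p \<le> (2 * Aa) powr p"
      using p1 by (intro powr_mono2) auto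
    then show "w i j * \<bar>f$i - \<sigma> i j * f$j\<bar> powr p \<le> w i j * (2 * Aa) powr p"
      using wt a by (intro mult_left_mono) (auto simp: is_edge_weight_def less_imp_le)
  qed
  then show ?thesis using rayleigh_sphere[OF assms] kappa_bound[OF assms] by linarith
qed

definition "Cc = (1/2) * (\<Sum>(i,j)\<in>{(i,j). adj i j}. w i j * (1 / \<mu> i + 1 / \<mu> j)) + K\<kappa>"

lemma rayleigh_upper_indep:
  assumes "f \<in> sphere_p \<mu> p" and ind: "independent_set adj S'"
    and supp: "\<forall>i. i \<notin> S' \<longrightarrow> f$i = 0"
  shows "rayleigh adj \<sigma> w \<mu> \<kappa> p f \<le> Cc"
proof -
  have "(\<Sum>(i,j)\<in>{(i,j). adj i j}. w i j * \<bar>f$i - \<sigma> i j * f$j\<bar> powr p)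
      \<le> (\<Sum>(i,j)\<in>{(i,j). adj i j}. w i j * (1 / \<mu> i + 1 / \<mu> j))"
  proof (rule sum_mono, clarify)
    fix i j assume a: "adj i j"
    have "\<bar>f$i - \<sigma> i j * f$j\<bar> powr p \<le> 1 / \<mu> i + 1 / \<mu> j"
    proof (cases "i \<in> S'")
      case True
      then have "j \<notin> S'" using ind a by (auto simp: independent_set_def)
      then have "\<bar>f$i - \<sigma> i j * f$j\<bar> powr p = \<bar>f$i\<bar> powr p" using supp by simp
      also have "\<dots> \<le> 1 / \<mu> i" by (rule coord_bound[OF assms(1)])
      finally show ?thesis using \<mu>[rule_format, of j] by (smt (verit) divide_pos_pos)
    next
      case False
      then have "\<bar>f$i - \<sigma> i j * f$j\<bar> powr p = \<bar>f$j\<bar> powr p" using supp sig_abs[OF a]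
        by (simp add: abs_mult)
      also have "\<dots> \<le> 1 / \<mu> j" by (rule coord_bound[OF assms(1)])
      finally show ?thesis using \<mu>[rule_format, of i] by (smt (verit) divide_pos_pos)
    qed
    then show "w i j * \<bar>f$i - \<sigma> i j * f$j\<bar> powr p \<le> w i j * (1 / \<mu> i + 1 / \<mu> j)"
      using wt a by (intro mult_left_mono) (auto simp: is_edge_weight_def less_imp_le)
  qed
  then show ?thesis using rayleigh_sphere[OF assms(1)] kappa_bound[OF assms(1)] by (simp add: Cc_def)
qed


lemma sphere_p_nonzero:
  assumes "f \<in> sphere_p \<mu> p"
  shows "\<exists>v. f$v \<noteq> 0"
proof (rule ccontr)
  assume "\<not> (\<exists>v. f$v \<noteq> 0)"
  then have "(\<Sum>i\<in>UNIV. \<mu> i * \<bar>f$i\<bar> powr p) = 0" by simp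
  then show False using assms by (simp add: sphere_p_def)
qed

lemma closed_sphere_p: "closed (sphere_p \<mu> p)"
proof -
  have "continuous_on UNIV (\<lambda>f::real^'v. \<Sum>i\<in>UNIV. \<mu> i * \<bar>f$i\<bar> powr p)"
    using p1 by (intro continuous_intros continuous_on_powr') auto
  then show ?thesis unfolding sphere_p_def
    by (intro closed_Collect_eq) (auto intro: continuous_intros)
qed

lemma genus_empty: "genus ({}::(real^'v) set) = 0"
  unfolding genus_def by (rule Least_eq_0) (simp add: genus_le_def)

lemma var_eig_bounds:
  assumes ind: "independent_set adj S'" and k: "card S' = k" and k1: "1 \<le> k"
  shows "- K\<kappa> \<le> var_eig adj \<sigma> w \<mu> \<kappa> p k \<and> var_eig adj \<sigma> w \<mu> \<kappa> p k \<le> Cc"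
proof -
  define Bs where "Bs = {f \<in> sphere_p \<mu> p. \<forall>i. i \<notin> S' \<longrightarrow> f$i = 0}"
  let ?R = "rayleigh adj \<sigma> w \<mu> \<kappa> p"
  obtain s where s: "bij_betw s {0..<k} S'"
    using ex_bij_betw_nat_finite[of S'] k by auto
  have gk: "genus_le Bs k"
    unfolding genus_le_def
  proof (intro exI[of _ "\<lambda>i f. f $ s i"] conjI allI impI ballI)
    fix i assume "i < k"
    show "continuous_on Bs (\<lambda>f. f $ s i)" by (intro continuous_intros)
    show "\<And>x. x \<in> Bs \<Longrightarrow> (- x) $ s i = - x $ s i" by simp
  next
    fix f assume f: "f \<in> Bs"
    then obtain v where v: "f$v \<noteq> 0" using sphere_p_nonzero by (auto simp: Bs_def)
    then have "v \<in> S'" using f by (auto simp: Bs_def)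
    then obtain i where "i < k" "s i = v" using s unfolding bij_betw_def by auto
    then show "\<exists>i<k. f $ s i \<noteq> 0" using v by auto
  qed
  have gBs: "k \<le> genus Bs"
  proof (rule ccontr)
    assume "\<not> k \<le> genus Bs"
    then have lt: "genus Bs < k" by simp
    have "genus_le Bs (genus Bs)" unfolding genus_def by (rule LeastI[of _ k]) (rule gk)
    moreover have "\<not> genus_le Bs (genus Bs)"
      unfolding Bs_def by (rule genus_lower[OF \<mu> _ k lt[unfolded Bs_def]]) (use p1 in auto)
    ultimately show False by simp
  qed
  have Bs_fam: "Bs \<in> genus_family \<mu> p k"
  proof -
    have "closed Bs"
    proof -
      have "Bs = sphere_p \<mu> p \<inter> {f. \<forall>i. i \<notin> S' \<longrightarrow> f$i = 0}" by (auto simp: Bs_def)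
      moreover have "closed {f::real^'v. \<forall>i. i \<notin> S' \<longrightarrow> f$i = 0}"
        by (intro closed_Collect_all closed_Collect_imp closed_Collect_eq open_Collect_const)
           (auto intro: continuous_intros)
      ultimately show ?thesis using closed_sphere_p by auto
    qed
    moreover have "\<forall>x\<in>Bs. - x \<in> Bs" by (auto simp: Bs_def sphere_p_def)
    ultimately show ?thesis using gBs by (auto simp: genus_family_def Bs_def)
  qed
  have fam_ne: "B \<noteq> {}" if "B \<in> genus_family \<mu> p k" for B
    using that k1 genus_empty by (auto simp: genus_family_def)
  have fam_sub: "B \<subseteq> sphere_p \<mu> p" if "B \<in> genus_family \<mu> p k" for B
    using that by (auto simp: genus_family_def)
  have bdd: "bdd_above (?R ` B)" if "B \<in> genus_family \<mu> p k" for B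
    using rayleigh_upper_gen fam_sub[OF that] by (auto intro!: bdd_aboveI2)
  have lowB: "- K\<kappa> \<le> Sup (?R ` B)" if B: "B \<in> genus_family \<mu> p k" for B
  proof -
    obtain f where f: "f \<in> B" using fam_ne[OF B] by auto
    have "- K\<kappa> \<le> ?R f" using rayleigh_lower fam_sub[OF B] f by auto
    also have "\<dots> \<le> Sup (?R ` B)" using f bdd[OF B] by (intro cSup_upper) auto
    finally show ?thesis .
  qed
  let ?V = "(\<lambda>B. Sup (?R ` B)) ` genus_family \<mu> p k"
  have Vne: "?V \<noteq> {}" using Bs_fam by auto
  have bddV: "bdd_below ?V" using lowB by (auto intro!: bdd_belowI2)
  have "- K\<kappa> \<le> Inf ?V" using Vne lowB by (intro cInf_greatest) auto
  moreover have "Inf ?V \<le> Sup (?R ` Bs)" using Bs_fam bddV by (intro cInf_lower) auto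
  moreover have "Sup (?R ` Bs) \<le> Cc"
  proof (rule cSup_least)
    show "?R ` Bs \<noteq> {}" using fam_ne[OF Bs_fam] by auto
    show "\<And>x. x \<in> ?R ` Bs \<Longrightarrow> x \<le> Cc"
      using rayleigh_upper_indep[OF _ ind] by (auto simp: Bs_def)
  qed
  ultimately show ?thesis by (simp add: var_eig_def)
qed
end



lemma two_powr_neg_tendsto: "((\<lambda>p::real. 2 powr (-p)) \<longlongrightarrow> 0) at_top"
proof -
  have 1: "filterlim (\<lambda>p::real. ln 2 * p) at_top at_top"
    by (rule filterlim_tendsto_pos_mult_at_top[OF tendsto_const]) (auto simp: filterlim_ident)
  have 2: "filterlim (\<lambda>p::real. - (ln 2 * p)) at_bot at_top"
    using 1 by (simp add: filterlim_uminus_at_bot)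
  have "((\<lambda>p::real. exp (- (ln 2 * p))) \<longlongrightarrow> (0::real)) at_top" by (rule filterlim_compose[OF exp_at_bot 2])
  moreover have "2 powr (-p) = exp (- (ln 2 * p))" for p::real by (simp add: powr_def mult.commute)
  ultimately show ?thesis by simp
qed

lemma lim_zero_bounded:
  fixes v :: "real \<Rightarrow> real" and L U :: real
  assumes "\<And>p. p \<ge> 1 \<Longrightarrow> L \<le> v p \<and> v p \<le> U"
  shows "((\<lambda>p. 2 powr (-p) * v p) \<longlongrightarrow> 0) at_top"
proof (rule Lim_null_comparison)
  show "\<forall>\<^sub>F p in at_top. norm (2 powr (-p) * v p) \<le> (\<bar>L\<bar> + \<bar>U\<bar>) * 2 powr (-p)"
    using eventually_ge_at_top[of "1::real"]
  proof eventually_elim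
    case (elim p)
    have "\<bar>v p\<bar> \<le> \<bar>L\<bar> + \<bar>U\<bar>" using assms[OF elim] by linarith
    then show ?case by (simp add: abs_mult mult.commute mult_right_mono)
  qed
  show "((\<lambda>p. (\<bar>L\<bar> + \<bar>U\<bar>) * 2 powr (-p)) \<longlongrightarrow> 0) at_top"
    using tendsto_mult_right_zero[OF two_powr_neg_tendsto] by simp
qed

theorem theorem6p2:
  fixes adj :: "'v::finite \<Rightarrow> 'v \<Rightarrow> bool"
    and w :: "'v \<Rightarrow> 'v \<Rightarrow> real"
    and \<mu> \<kappa> :: "'v \<Rightarrow> real"
  assumes "simple_graph adj"
    and "is_edge_weight adj w"
    and "\<forall>i. \<mu> i > 0"
  shows "independence_number adj \<le>
    Min {card {k \<in> {1..CARD('v)}. cutoff_eig adj \<sigma> w \<mu> \<kappa> k = 0} | \<sigma>. is_signature adj \<sigma>}"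
proof -
  let ?I = "{S. independent_set adj S}"
  have finI: "finite (card ` ?I)" by simp
  have neI: "card ` ?I \<noteq> {}" using independent_set_def[of adj "{}"] by auto
  obtain S where S: "independent_set adj S" "card S = independence_number adj"
    using Max_in[OF finI neI] unfolding independence_number_def by auto
  define \<alpha> where "\<alpha> = independence_number adj"
  have \<alpha>N: "\<alpha> \<le> CARD('v)" using S card_mono[of UNIV S] by (simp add: \<alpha>_def)
  have key: "cutoff_eig adj \<sigma> w \<mu> \<kappa> k = 0" if sig: "is_signature adj \<sigma>" and k: "1 \<le> k" "k \<le> \<alpha>" for \<sigma> k
  proof -
    obtain S' where S': "S' \<subseteq> S" "card S' = k"
      using obtain_subset_with_card_n[of k S] k S by (auto simp: \<alpha>_def)
    have ind: "independent_set adj S'" using S(1) S'(1) by (auto simp: independent_set_def)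
    have b: "- K\<kappa> \<mu> \<kappa> \<le> var_eig adj \<sigma> w \<mu> \<kappa> p k \<and> var_eig adj \<sigma> w \<mu> \<kappa> p k \<le> Cc adj w \<mu> \<kappa>"
      if "p \<ge> 1" for p
      by (rule var_eig_bounds[OF sig assms(2) assms(3) that ind S'(2) k(1)])
    have "((\<lambda>p. 2 powr (-p) * var_eig adj \<sigma> w \<mu> \<kappa> p k) \<longlongrightarrow> 0) at_top"
      by (rule lim_zero_bounded[OF b])
    then show ?thesis unfolding cutoff_eig_def by (intro tendsto_Lim) auto
  qed
  let ?X = "{card {k \<in> {1..CARD('v)}. cutoff_eig adj \<sigma> w \<mu> \<kappa> k = 0} | \<sigma>. is_signature adj \<sigma>}"
  have Xsub: "?X \<subseteq> {..CARD('v)}"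
  proof
    fix x assume "x \<in> ?X"
    then obtain \<sigma> where "x = card {k \<in> {1..CARD('v)}. cutoff_eig adj \<sigma> w \<mu> \<kappa> k = 0}" by auto
    moreover have "card {k \<in> {1..CARD('v)}. cutoff_eig adj \<sigma> w \<mu> \<kappa> k = 0} \<le> card {1..CARD('v)}"
      by (intro card_mono) auto
    ultimately show "x \<in> {..CARD('v)}" by simp
  qed
  have finX: "finite ?X" using finite_subset[OF Xsub] by simp
  have "is_signature adj (\<lambda>i j. 1)" by (simp add: is_signature_def)
  then have neX: "?X \<noteq> {}" by auto
  have "\<alpha> \<le> x" if "x \<in> ?X" for x
  proof -
    obtain \<sigma> where sig: "is_signature adj \<sigma>"
      and x: "x = card {k \<in> {1..CARD('v)}. cutoff_eig adj \<sigma> w \<mu> \<kappa> k = 0}" using \<open>x \<in> ?X\<close> by auto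
    have "{1..\<alpha>} \<subseteq> {k \<in> {1..CARD('v)}. cutoff_eig adj \<sigma> w \<mu> \<kappa> k = 0}"
      using key[OF sig] \<alpha>N by auto
    then have "card {1..\<alpha>} \<le> x" unfolding x by (intro card_mono) auto
    then show ?thesis by simp
  qed
  then show ?thesis unfolding \<alpha>_def[symmetric] using Min_ge_iff[OF finX neX] by auto
qed

end
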